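(* Let $g\ge1$, $\alpha,\alpha_1,\dots,\alpha_{2g-1}\in\mathbb C$, $f_{g-1}(x)=\prod_{j=1}^{2g-1}(x-\alpha_j)=\sum_{i=0}^{2g-1}\tilde\mu_{4g-2-2i}x^i$ and $f_g(x)=(x-\alpha)^2f_{g-1}(x)=\sum_{i=0}^{2g+1}\mu_{4g+2-2i}x^i$ (with coefficients of indices outside these ranges set to $0$). Put $H_g(x_1,x_2)=\sum_{i=0}^g(x_1x_2)^i(2\mu_{4g+2-4i}+\mu_{4g-4i}(x_1+x_2))$ and $H_{g-1}(x_1,x_2)=\sum_{i=0}^{g-1}(x_1x_2)^i(2\tilde\mu_{4g-2-4i}+\tilde\mu_{4g-4-4i}(x_1+x_2))$. Then $$H_g(x_1,x_2)=(x_1-\alpha)(x_2-\alpha)H_{g-1}(x_1,x_2)+\alpha(x_1-x_2)^2\sum_{i=0}^{g-1}\tilde\mu_{4g-4-4i}x_1^ix_2^i.$$ *)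

theory Defs
  imports "HOL-Analysis.Analysis" "HOL-Computational_Algebra.Polynomial"
begin

text \<open>Coefficient labelling of the paper: for a polynomial f of degree d = 2m+1,
  f(x) = sum_{i=0}^{d} mu_{2d - 2i} x^i, i.e. mu_k = coeff f ((2d - k)/2) for even k
  with 0 <= k <= 2d, and mu_k = 0 for all other integer indices k.\<close>
definition mu_coeff :: "complex poly \<Rightarrow> nat \<Rightarrow> int \<Rightarrow> complex" where
  "mu_coeff f d k = (if 0 \<le> k \<and> k \<le> 2 * int d \<and> even k
                       then coeff f (nat ((2 * int d - k) div 2)) else 0)"

end

theory Submission
  imports Defs
begin

lemma core:
  fixes c d :: "nat \<Rightarrow> complex" and p ss a :: complex
  assumes d0: "d 0 = a^2 * c 0" and d1: "d 1 = -2*a*c 0 + a^2 * c 1"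
    and dS: "\<And>k. d (Suc (Suc k)) = c k - 2*a*c (k+1) + a^2 * c (k+2)"
  shows "(\<Sum>i<Suc n. p^i * (2 * d (2*i) + d (2*i+1) * ss)) =
     (p + a^2 - a* ss) * (\<Sum>i<n. p^i * (2 * c (2*i) + c (2*i+1) * ss))
     + a * (ss^2 - 4*p) * (\<Sum>i<n. c (2*i+1) * p^i)
     + p^n * (2*a^2 * c (2*n) + ss * (a^2 * c (2*n+1) - 2*a*c (2*n)))"
proof (induction n)
  case 0
  have d1': "d (Suc 0) = -2*a*c 0 + a^2 * c 1" using d1 by simp
  show ?case by (simp add: d0 d1' algebra_simps power2_eq_square)
next
  case (Suc n)
  have e1: "d (2 * Suc n) = c (2*n) - 2*a*c (2*n+1) + a^2 * c (2*n+2)"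
    using dS[of "2*n"] by (simp add: numeral_2_eq_2)
  have e2: "d (2 * Suc n + 1) = c (2*n+1) - 2*a*c (2*n+2) + a^2 * c (2*n+3)"
    using dS[of "2*n+1"] by (simp add: numeral_2_eq_2 numeral_3_eq_3)
  have "(\<Sum>i<Suc (Suc n). p^i * (2 * d (2*i) + d (2*i+1) * ss)) =
     (\<Sum>i<Suc n. p^i * (2 * d (2*i) + d (2*i+1) * ss)) + p^(Suc n) * (2 * d (2*Suc n) + d (2*Suc n+1) * ss)"
    by simp
  also have "\<dots> = (p + a^2 - a* ss) * (\<Sum>i<n. p^i * (2 * c (2*i) + c (2*i+1) * ss))
     + a * (ss^2 - 4*p) * (\<Sum>i<n. c (2*i+1) * p^i)
     + p^n * (2*a^2 * c (2*n) + ss * (a^2 * c (2*n+1) - 2*a*c (2*n)))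
     + p^(Suc n) * (2 * (c (2*n) - 2*a*c (2*n+1) + a^2 * c (2*n+2)) + (c (2*n+1) - 2*a*c (2*n+2) + a^2 * c (2*n+3)) * ss)"
    using Suc e1 e2 by simp
  also have "\<dots> = (p + a^2 - a* ss) * (\<Sum>i<Suc n. p^i * (2 * c (2*i) + c (2*i+1) * ss))
     + a * (ss^2 - 4*p) * (\<Sum>i<Suc n. c (2*i+1) * p^i)
     + p^(Suc n) * (2*a^2 * c (2*Suc n) + ss * (a^2 * c (2*Suc n+1) - 2*a*c (2*Suc n)))"
    by (simp add: algebra_simps power2_eq_square numeral_3_eq_3)
  finally show ?case .
qed

theorem lemma10:
  fixes g :: nat and \<alpha> :: complex and \<alpha>s :: "nat \<Rightarrow> complex"
    and x1 x2 :: complex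
  assumes "g \<ge> 1"
  defines "fg1 \<equiv> (\<Prod>j = 1..2*g-1. [:- \<alpha>s j, 1:])"
  defines "fg \<equiv> [:- \<alpha>, 1:]^2 * fg1"
  defines "mu \<equiv> mu_coeff fg (2*g+1)"
  defines "mut \<equiv> mu_coeff fg1 (2*g-1)"
  defines "Hg \<equiv> (\<Sum>i = 0..g. (x1*x2)^i *
              (2 * mu (4*int g + 2 - 4*int i) + mu (4*int g - 4*int i) * (x1 + x2)))"
  defines "Hg1 \<equiv> (\<Sum>i = 0..g-1. (x1*x2)^i *
              (2 * mut (4*int g - 2 - 4*int i) + mut (4*int g - 4 - 4*int i) * (x1 + x2)))"
  shows "Hg = (x1 - \<alpha>) * (x2 - \<alpha>) * Hg1
              + \<alpha> * (x1 - x2)^2 * (\<Sum>i = 0..g-1. mut (4*int g - 4 - 4*int i) * x1^i * x2^i)"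
proof -
  define c where "c = coeff fg1"
  define d where "d = coeff fg"
  define p where "p = x1 * x2"
  define ss where "ss = x1 + x2"
  have g1: "int (2*g-1) = 2*int g - 1" using assms(1) by simp
  have degle: "degree fg1 \<le> 2*g-1"
  proof -
    have "degree fg1 \<le> (\<Sum>j=1..2*g-1. (degree \<circ> (\<lambda>j. [:- \<alpha>s j, 1:])) j)"
      unfolding fg1_def by (rule degree_prod_sum_le) simp
    also have "\<dots> = 2*g-1" by simp
    finally show ?thesis .
  qed
  have c0: "c k = 0" if "k \<ge> 2*g" for k
    unfolding c_def using degle that using assms(1) by (intro coeff_eq_0) arith
  have sq: "[:- \<alpha>, 1:]^2 = pCons (\<alpha>^2) (pCons (-2*\<alpha>) [:1:])"
    by (simp add: power2_eq_square algebra_simps)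
  have fgx: "fg = smult (\<alpha>^2) fg1 + pCons 0 (smult (-2*\<alpha>) fg1 + pCons 0 fg1)"
    unfolding fg_def sq by (simp add: algebra_simps)
  have d0: "d 0 = \<alpha>^2 * c 0" unfolding d_def c_def fgx by simp
  have d1: "d 1 = -2*\<alpha>*c 0 + \<alpha>^2 * c 1" unfolding d_def c_def fgx by (simp add: coeff_pCons)
  have dS: "d (Suc (Suc k)) = c k - 2*\<alpha>*c (k+1) + \<alpha>^2 * c (k+2)" for k
    unfolding d_def c_def fgx by (simp add: coeff_pCons)
  have hn: "nat (1 + 2*int i) = Suc (2*i)" for i by arith
  have mu1: "mu (4*int g + 2 - 4*int i) = d (2*i)" if "i \<le> g" for i
    using that unfolding mu_def mu_coeff_def d_def by (simp add: nat_mult_distrib hn)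
  have mu2: "mu (4*int g - 4*int i) = d (2*i+1)" if "i \<le> g" for i
    using that unfolding mu_def mu_coeff_def d_def by (simp add: nat_mult_distrib hn)
  have mut1: "mut (4*int g - 2 - 4*int i) = c (2*i)" if "i \<le> g-1" for i
    using that assms(1) unfolding mut_def mu_coeff_def c_def g1 by (simp add: nat_mult_distrib hn)
  have mut2: "mut (4*int g - 4 - 4*int i) = c (2*i+1)" if "i \<le> g-1" for i
    using that assms(1) unfolding mut_def mu_coeff_def c_def g1 by (simp add: nat_mult_distrib hn)
  have r: "{0..g-1} = {..<g}" using assms(1) by auto
  have Hg': "Hg = (\<Sum>i<Suc g. p^i * (2 * d (2*i) + d (2*i+1) * ss))"
    unfolding Hg_def p_def ss_def atLeast0AtMost lessThan_Suc_atMost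
    by (intro sum.cong refl) (simp add: mu1 mu2)
  have Hg1': "Hg1 = (\<Sum>i<g. p^i * (2 * c (2*i) + c (2*i+1) * ss))"
    unfolding Hg1_def p_def ss_def r
    by (intro sum.cong refl) (simp add: mut1 mut2)
  have S': "(\<Sum>i = 0..g-1. mut (4*int g - 4 - 4*int i) * x1^i * x2^i) = (\<Sum>i<g. c (2*i+1) * p^i)"
    unfolding p_def r
    by (intro sum.cong refl) (simp add: mut2 power_mult_distrib)
  have main: "(\<Sum>i<Suc g. p^i * (2 * d (2*i) + d (2*i+1) * ss)) =
     (p + \<alpha>^2 - \<alpha> * ss) * (\<Sum>i<g. p^i * (2 * c (2*i) + c (2*i+1) * ss))
     + \<alpha> * (ss^2 - 4*p) * (\<Sum>i<g. c (2*i+1) * p^i)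
     + p^g * (2*\<alpha>^2 * c (2*g) + ss * (\<alpha>^2 * c (2*g+1) - 2*\<alpha>*c (2*g)))"
    by (rule core[OF d0 d1 dS])
  have e1: "(x1 - \<alpha>) * (x2 - \<alpha>) = p + \<alpha>^2 - \<alpha> * ss" unfolding p_def ss_def
    by (simp add: algebra_simps power2_eq_square)
  have e2: "(x1 - x2)^2 = ss^2 - 4*p" unfolding p_def ss_def
    by (simp add: algebra_simps power2_eq_square)
  show ?thesis unfolding Hg' Hg1' S' e1 e2 main using c0[of "2*g"] c0[of "2*g+1"] by simp
qed

end
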